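(* Consider the $L$-layer LSTM described in the context, with $L\in\mathbb{N}$, and let $k\in\mathbb{Z}_{\ge 0}$. For every $l\in[L]$, the set $\mathcal{S}^{(l)}(k)=\mathcal{C}^{(l)}(k)\times\mathcal{H}^{(l)}(k)$ is invariant: for every input sequence $x(t)\in[-x_{\max},x_{\max}]^{n_x}$, $t\ge 0$, if $s^{(l)}(0)=(c^{(l)}(0),h^{(l)}(0))\in\mathcal{S}^{(l)}(k)$, then $s^{(l)}(t)=(c^{(l)}(t),h^{(l)}(t))\in\mathcal{S}^{(l)}(k)$ for all $t\in\mathbb{Z}_{\ge 0}$. Moreover, $\mathcal{S}^{(l)}(k+1)\subseteq\mathcal{S}^{(l)}(k)$ for all $k\in\mathbb{Z}_{\ge 0}$.
   Context: LSTM: fix $L\in\mathbb{N}$, dimensions $n_x,n_c$, and $x_{\max}>0$. For $l\in[L]$ let $n^{(l)}=n_x$ if $l=1$, $n^{(l)}=n_c$ if $l\ge2$; weights $W^{(l)}_*\in\mathbb{R}^{n_c\times n^{(l)}}$, $U^{(l)}_*\in\mathbb{R}^{n_c\times n_c}$, biases $b^{(l)}_*\in\mathbb{R}^{n_c}$, $*\in\{f,i,c,o\}$. With $\sigma(w)=1/(1+e^{-w})$, $\phi=\tanh$ (componentwise) and $\odot$ the componentwise product, for $t\in\mathbb{Z}_{\ge0}$: $c^{(l)}(t+1)=\sigma(W^{(l)}_f x^{(l)}(t)+U^{(l)}_f h^{(l)}(t)+b^{(l)}_f)\odot c^{(l)}(t)+\sigma(W^{(l)}_i x^{(l)}(t)+U^{(l)}_i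 h^{(l)}(t)+b^{(l)}_i)\odot\phi(W^{(l)}_c x^{(l)}(t)+U^{(l)}_c h^{(l)}(t)+b^{(l)}_c)$, $h^{(l)}(t+1)=\sigma(W^{(l)}_o x^{(l)}(t)+U^{(l)}_o h^{(l)}(t)+b^{(l)}_o)\odot\phi(c^{(l)}(t+1))$, where $x^{(1)}(t)=x(t)\in[-x_{\max},x_{\max}]^{n_x}$ and $x^{(l)}(t)=h^{(l-1)}(t+1)$ for $l\ge2$; $c^{(l)}\in\mathbb{R}^{n_c}$, $h^{(l)}\in(-1,1)^{n_c}$, and $s^{(l)}(t)=(c^{(l)}(t),h^{(l)}(t))$. Invariant-set quantities: let $x^{(l)}_{\max}=x_{\max}$ if $l=1$ and $=1$ if $l\ge2$. For a matrix $A$, $|A|$ is the entrywise absolute value; $\mathbf{1}_n$ the all-ones vector; $v_+=(\max\{v_{(j)},0\})_j$; $\|v\|_\infty=\max_j|v_{(j)}|$. For $\eta\ge0$ and $*\in\{f,i,o\}$: $G^{(l)}_*(\eta)=\|(x^{(l)}_{\max}|W^{(l)}_*|\mathbf{1}_{n^{(l)}}+\eta|U^{(l)}_*|\mathbf{1}_{n_c}+b^{(l)}_* )_+\|_\infty$, $G^{(l)}_c(\eta)=\|x^{(l)}_{\max}|W^{(l)}_c|\mathbf{1}_{n^{(l)}}+\eta|U^{(l)}_c|\mathbf{1}_{n_c}+|b^{(l)}_c|\|_\infty$. With $\eta^{(l)}(-1)=1$ and for $k\ge0$: $\overline{\sigma}^{(l)}_*(k)=\sigma(G^{(l)}_*(\eta^{(l)}(k-1)))$,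 $\overline{\phi}^{(l)}_c(k)=\phi(G^{(l)}_c(\eta^{(l)}(k-1)))$, $\overline{c}^{(l)}(k)=\overline{\sigma}^{(l)}_i(k)\overline{\phi}^{(l)}_c(k)/(1-\overline{\sigma}^{(l)}_f(k))$, $\eta^{(l)}(k)=\phi(\overline{c}^{(l)}(k))\overline{\sigma}^{(l)}_o(k)$. Finally $\mathcal{C}^{(l)}(k)=\{c\in\mathbb{R}^{n_c}:\|c\|_\infty\le\overline{c}^{(l)}(k)\}$ and $\mathcal{H}^{(l)}(k)=\{h\in\mathbb{R}^{n_c}:\|h\|_\infty\le\phi(\overline{c}^{(l)}(k))\overline{\sigma}^{(l)}_o(k)\}$. *)

theory Defs
  imports Complex_Main
begin

text \<open>Vectors in R^n are represented as functions nat => real, only the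
  components j < n being relevant; an n_c x n matrix A is nat => nat => real
  with entries A j m for j < n_c, m < n.\<close>

datatype gate = Gf | Gi | Gc | Go

definition sigmoid :: "real \<Rightarrow> real" where
  "sigmoid w = 1 / (1 + exp (- w))"

definition mv :: "nat \<Rightarrow> (nat \<Rightarrow> nat \<Rightarrow> real) \<Rightarrow> (nat \<Rightarrow> real) \<Rightarrow> nat \<Rightarrow> real" where
  "mv n A v j = (\<Sum>m<n. A j m * v m)"

definition norm_inf :: "nat \<Rightarrow> (nat \<Rightarrow> real) \<Rightarrow> real" where
  "norm_inf n v = Max (insert 0 ((\<lambda>j. \<bar>v j\<bar>) ` {..<n}))"

definition nin :: "nat \<Rightarrow> nat \<Rightarrow> nat \<Rightarrow> nat" where
  "nin nx nc l = (if l = 1 then nx else nc)"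

definition xmaxl :: "real \<Rightarrow> nat \<Rightarrow> real" where
  "xmaxl xmax l = (if l = 1 then xmax else 1)"

definition lstm_traj ::
  "nat \<Rightarrow> nat \<Rightarrow> nat \<Rightarrow> (nat \<Rightarrow> gate \<Rightarrow> nat \<Rightarrow> nat \<Rightarrow> real) \<Rightarrow> (nat \<Rightarrow> gate \<Rightarrow> nat \<Rightarrow> nat \<Rightarrow> real)
   \<Rightarrow> (nat \<Rightarrow> gate \<Rightarrow> nat \<Rightarrow> real) \<Rightarrow> (nat \<Rightarrow> nat \<Rightarrow> real)
   \<Rightarrow> (nat \<Rightarrow> nat \<Rightarrow> nat \<Rightarrow> real) \<Rightarrow> (nat \<Rightarrow> nat \<Rightarrow> nat \<Rightarrow> real) \<Rightarrow> bool" where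
  "lstm_traj L nx nc W U b x c h \<longleftrightarrow>
    (\<forall>l\<in>{1..L}. \<forall>t. \<forall>j<nc.
      (let xin = (if l = 1 then x t else h (l - 1) (Suc t));
           z = (\<lambda>g. mv (nin nx nc l) (W l g) xin j + mv nc (U l g) (h l t) j + b l g j)
       in c l (Suc t) j = sigmoid (z Gf) * c l t j + sigmoid (z Gi) * tanh (z Gc)
        \<and> h l (Suc t) j = sigmoid (z Go) * tanh (c l (Suc t) j)))"

definition Ggate ::
  "nat \<Rightarrow> nat \<Rightarrow> real \<Rightarrow> (nat \<Rightarrow> gate \<Rightarrow> nat \<Rightarrow> nat \<Rightarrow> real) \<Rightarrow> (nat \<Rightarrow> gate \<Rightarrow> nat \<Rightarrow> nat \<Rightarrow> real)
   \<Rightarrow> (nat \<Rightarrow> gate \<Rightarrow> nat \<Rightarrow> real) \<Rightarrow> nat \<Rightarrow> gate \<Rightarrow> real \<Rightarrow> real" where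
  "Ggate nx nc xmax W U b l g \<eta> =
     norm_inf nc (\<lambda>j. max (xmaxl xmax l * (\<Sum>m<nin nx nc l. \<bar>W l g j m\<bar>)
                            + \<eta> * (\<Sum>m<nc. \<bar>U l g j m\<bar>) + b l g j) 0)"

definition Gcell ::
  "nat \<Rightarrow> nat \<Rightarrow> real \<Rightarrow> (nat \<Rightarrow> gate \<Rightarrow> nat \<Rightarrow> nat \<Rightarrow> real) \<Rightarrow> (nat \<Rightarrow> gate \<Rightarrow> nat \<Rightarrow> nat \<Rightarrow> real)
   \<Rightarrow> (nat \<Rightarrow> gate \<Rightarrow> nat \<Rightarrow> real) \<Rightarrow> nat \<Rightarrow> real \<Rightarrow> real" where
  "Gcell nx nc xmax W U b l \<eta> =
     norm_inf nc (\<lambda>j. xmaxl xmax l * (\<Sum>m<nin nx nc l. \<bar>W l Gc j m\<bar>)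
                      + \<eta> * (\<Sum>m<nc. \<bar>U l Gc j m\<bar>) + \<bar>b l Gc j\<bar>)"

definition cbar_of ::
  "nat \<Rightarrow> nat \<Rightarrow> real \<Rightarrow> (nat \<Rightarrow> gate \<Rightarrow> nat \<Rightarrow> nat \<Rightarrow> real) \<Rightarrow> (nat \<Rightarrow> gate \<Rightarrow> nat \<Rightarrow> nat \<Rightarrow> real)
   \<Rightarrow> (nat \<Rightarrow> gate \<Rightarrow> nat \<Rightarrow> real) \<Rightarrow> nat \<Rightarrow> real \<Rightarrow> real" where
  "cbar_of nx nc xmax W U b l \<eta> =
     sigmoid (Ggate nx nc xmax W U b l Gi \<eta>) * tanh (Gcell nx nc xmax W U b l \<eta>)
       / (1 - sigmoid (Ggate nx nc xmax W U b l Gf \<eta>))"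

text \<open>eta_prev ... l k = eta^(l)(k-1); so eta_prev ... l 0 = eta^(l)(-1) = 1.\<close>
fun eta_prev ::
  "nat \<Rightarrow> nat \<Rightarrow> real \<Rightarrow> (nat \<Rightarrow> gate \<Rightarrow> nat \<Rightarrow> nat \<Rightarrow> real) \<Rightarrow> (nat \<Rightarrow> gate \<Rightarrow> nat \<Rightarrow> nat \<Rightarrow> real)
   \<Rightarrow> (nat \<Rightarrow> gate \<Rightarrow> nat \<Rightarrow> real) \<Rightarrow> nat \<Rightarrow> nat \<Rightarrow> real" where
  "eta_prev nx nc xmax W U b l 0 = 1"
| "eta_prev nx nc xmax W U b l (Suc k) =
     tanh (cbar_of nx nc xmax W U b l (eta_prev nx nc xmax W U b l k))
       * sigmoid (Ggate nx nc xmax W U b l Go (eta_prev nx nc xmax W U b l k))"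

definition cbar ::
  "nat \<Rightarrow> nat \<Rightarrow> real \<Rightarrow> (nat \<Rightarrow> gate \<Rightarrow> nat \<Rightarrow> nat \<Rightarrow> real) \<Rightarrow> (nat \<Rightarrow> gate \<Rightarrow> nat \<Rightarrow> nat \<Rightarrow> real)
   \<Rightarrow> (nat \<Rightarrow> gate \<Rightarrow> nat \<Rightarrow> real) \<Rightarrow> nat \<Rightarrow> nat \<Rightarrow> real" where
  "cbar nx nc xmax W U b l k = cbar_of nx nc xmax W U b l (eta_prev nx nc xmax W U b l k)"

definition hbar ::
  "nat \<Rightarrow> nat \<Rightarrow> real \<Rightarrow> (nat \<Rightarrow> gate \<Rightarrow> nat \<Rightarrow> nat \<Rightarrow> real) \<Rightarrow> (nat \<Rightarrow> gate \<Rightarrow> nat \<Rightarrow> nat \<Rightarrow> real)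
   \<Rightarrow> (nat \<Rightarrow> gate \<Rightarrow> nat \<Rightarrow> real) \<Rightarrow> nat \<Rightarrow> nat \<Rightarrow> real" where
  "hbar nx nc xmax W U b l k =
     tanh (cbar nx nc xmax W U b l k)
       * sigmoid (Ggate nx nc xmax W U b l Go (eta_prev nx nc xmax W U b l k))"

definition Cset where
  "Cset nx nc xmax W U b l k = {c :: nat \<Rightarrow> real. norm_inf nc c \<le> cbar nx nc xmax W U b l k}"

definition Hset where
  "Hset nx nc xmax W U b l k = {h :: nat \<Rightarrow> real. norm_inf nc h \<le> hbar nx nc xmax W U b l k}"

definition Sset where
  "Sset nx nc xmax W U b l k = Cset nx nc xmax W U b l k \<times> Hset nx nc xmax W U b l k"

end

theory Submission imports Defs begin

lemma sigmoid_pos: "0 < sigmoid w" unfolding sigmoid_def by (simp add: add_pos_pos)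
lemma sigmoid_lt1: "sigmoid w < 1" unfolding sigmoid_def
  by (subst divide_less_eq) (auto simp: add_pos_pos)
lemma sigmoid_mono: "a \<le> b \<Longrightarrow> sigmoid a \<le> sigmoid b"
  unfolding sigmoid_def by (simp add: frac_le add_pos_pos)

lemma norm_inf_nonneg: "0 \<le> norm_inf n v"
  unfolding norm_inf_def by (simp add: Max_ge_iff)
lemma norm_inf_ge: "j < n \<Longrightarrow> \<bar>v j\<bar> \<le> norm_inf n v"
  unfolding norm_inf_def by (simp add: Max_ge_iff)
lemma norm_inf_le: "(\<And>j. j < n \<Longrightarrow> \<bar>v j\<bar> \<le> B) \<Longrightarrow> 0 \<le> B \<Longrightarrow> norm_inf n v \<le> B"
  unfolding norm_inf_def by (auto simp: Max_le_iff)
lemma norm_inf_mono: "(\<And>j. j < n \<Longrightarrow> \<bar>v j\<bar> \<le> \<bar>w j\<bar>) \<Longrightarrow> norm_inf n v \<le> norm_inf n w"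
proof -
  assume a: "\<And>j. j < n \<Longrightarrow> \<bar>v j\<bar> \<le> \<bar>w j\<bar>"
  show ?thesis
  proof (rule norm_inf_le)
    fix j assume "j < n" then show "\<bar>v j\<bar> \<le> norm_inf n w" using a[of j] norm_inf_ge[of j n w] by linarith
  qed (rule norm_inf_nonneg)
qed
lemma norm_inf_le_iff: "norm_inf n v \<le> B \<Longrightarrow> j < n \<Longrightarrow> \<bar>v j\<bar> \<le> B"
  using norm_inf_ge order_trans by blast

lemma xmaxl_nonneg: "0 < xmax \<Longrightarrow> 0 \<le> xmaxl xmax l" unfolding xmaxl_def by simp

lemma Ggate_nonneg: "0 \<le> Ggate nx nc xmax W U b l g e"
  unfolding Ggate_def by (rule norm_inf_nonneg)
lemma Gcell_nonneg: "0 \<le> Gcell nx nc xmax W U b l e"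
  unfolding Gcell_def by (rule norm_inf_nonneg)

lemma sum_abs_nonneg: "0 \<le> (\<Sum>m<n. \<bar>A m\<bar>::real)" by (simp add: sum_nonneg)

lemma Ggate_mono: "0 \<le> e \<Longrightarrow> e \<le> e' \<Longrightarrow> Ggate nx nc xmax W U b l g e \<le> Ggate nx nc xmax W U b l g e'"
  unfolding Ggate_def
proof (rule norm_inf_mono)
  fix j assume "0 \<le> e" "e \<le> e'"
  have "e * (\<Sum>m<nc. \<bar>U l g j m\<bar>) \<le> e' * (\<Sum>m<nc. \<bar>U l g j m\<bar>)"
    using \<open>e \<le> e'\<close> sum_abs_nonneg by (rule mult_right_mono)
  then show "\<bar>max (xmaxl xmax l * (\<Sum>m<nin nx nc l. \<bar>W l g j m\<bar>) + e * (\<Sum>m<nc. \<bar>U l g j m\<bar>) + b l g j) 0\<bar>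
         \<le> \<bar>max (xmaxl xmax l * (\<Sum>m<nin nx nc l. \<bar>W l g j m\<bar>) + e' * (\<Sum>m<nc. \<bar>U l g j m\<bar>) + b l g j) 0\<bar>"
    by simp
qed

lemma Gcell_mono: "0 < xmax \<Longrightarrow> 0 \<le> e \<Longrightarrow> e \<le> e' \<Longrightarrow> Gcell nx nc xmax W U b l e \<le> Gcell nx nc xmax W U b l e'"
  unfolding Gcell_def
proof (rule norm_inf_mono)
  fix j assume "0 < xmax" "0 \<le> e" "e \<le> e'"
  have "e * (\<Sum>m<nc. \<bar>U l Gc j m\<bar>) \<le> e' * (\<Sum>m<nc. \<bar>U l Gc j m\<bar>)"
    using \<open>e \<le> e'\<close> sum_abs_nonneg by (rule mult_right_mono)
  moreover have "0 \<le> e * (\<Sum>m<nc. \<bar>U l Gc j m\<bar>)" using \<open>0 \<le> e\<close> sum_abs_nonneg by simp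
  moreover have "0 \<le> xmaxl xmax l * (\<Sum>m<nin nx nc l. \<bar>W l Gc j m\<bar>)"
    using xmaxl_nonneg[OF \<open>0 < xmax\<close>] sum_abs_nonneg by simp
  ultimately show "\<bar>xmaxl xmax l * (\<Sum>m<nin nx nc l. \<bar>W l Gc j m\<bar>) + e * (\<Sum>m<nc. \<bar>U l Gc j m\<bar>) + \<bar>b l Gc j\<bar>\<bar>
         \<le> \<bar>xmaxl xmax l * (\<Sum>m<nin nx nc l. \<bar>W l Gc j m\<bar>) + e' * (\<Sum>m<nc. \<bar>U l Gc j m\<bar>) + \<bar>b l Gc j\<bar>\<bar>"
    by simp
qed

lemma cbar_of_nonneg: "0 \<le> cbar_of nx nc xmax W U b l e"
  unfolding cbar_of_def
  using sigmoid_pos[of "Ggate nx nc xmax W U b l Gi e"] sigmoid_lt1[of "Ggate nx nc xmax W U b l Gf e"]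
    Gcell_nonneg[of nx nc xmax W U b l e]
  by (simp add: tanh_real_nonneg_iff)

lemma cbar_of_mono: "0 < xmax \<Longrightarrow> 0 \<le> e \<Longrightarrow> e \<le> e' \<Longrightarrow> cbar_of nx nc xmax W U b l e \<le> cbar_of nx nc xmax W U b l e'"
proof -
  assume a: "0 < xmax" "0 \<le> e" "e \<le> e'"
  define si where "si = sigmoid (Ggate nx nc xmax W U b l Gi e)"
  define si' where "si' = sigmoid (Ggate nx nc xmax W U b l Gi e')"
  define sf where "sf = sigmoid (Ggate nx nc xmax W U b l Gf e)"
  define sf' where "sf' = sigmoid (Ggate nx nc xmax W U b l Gf e')"
  define tc where "tc = tanh (Gcell nx nc xmax W U b l e)"
  define tc' where "tc' = tanh (Gcell nx nc xmax W U b l e')"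
  have 1: "si \<le> si'" unfolding si_def si'_def by (intro sigmoid_mono Ggate_mono a)
  have 2: "sf \<le> sf'" unfolding sf_def sf'_def by (intro sigmoid_mono Ggate_mono a)
  have 3: "tc \<le> tc'" unfolding tc_def tc'_def using Gcell_mono[OF a] tanh_real_le_iff by blast
  have p: "0 < si" "sf' < 1" "0 \<le> tc"
    unfolding si_def sf'_def tc_def using sigmoid_pos sigmoid_lt1 Gcell_nonneg tanh_real_nonneg_iff by auto
  have "si * tc \<le> si' * tc'" using 1 3 p by (intro mult_mono) auto
  moreover have "0 \<le> si * tc" using p by simp
  moreover have "0 < 1 - sf'" "1 - sf' \<le> 1 - sf" using p 2 by auto
  ultimately have "si * tc / (1 - sf) \<le> si' * tc' / (1 - sf')"
    by (meson frac_le order_trans)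
  then show ?thesis unfolding cbar_of_def si_def si'_def sf_def sf'_def tc_def tc'_def .
qed

lemma F_nonneg: "0 \<le> tanh (cbar_of nx nc xmax W U b l e) * sigmoid (Ggate nx nc xmax W U b l Go e)"
  using cbar_of_nonneg[of nx nc xmax W U b l e] sigmoid_pos[of "Ggate nx nc xmax W U b l Go e"]
  by (simp add: tanh_real_nonneg_iff)

lemma eta_nonneg: "0 \<le> eta_prev nx nc xmax W U b l k"
proof (cases k)
  case (Suc k')
  then show ?thesis using F_nonneg by (simp only: eta_prev.simps(2))
qed simp

lemma eta_lt1: "eta_prev nx nc xmax W U b l k \<le> 1"
proof (cases k)
  case (Suc k')
  have "tanh (cbar_of nx nc xmax W U b l (eta_prev nx nc xmax W U b l k')) \<le> 1"
    using tanh_real_lt_1 less_imp_le by blast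
  moreover have "sigmoid (Ggate nx nc xmax W U b l Go (eta_prev nx nc xmax W U b l k')) \<le> 1"
    using sigmoid_lt1 less_imp_le by blast
  moreover have "0 \<le> tanh (cbar_of nx nc xmax W U b l (eta_prev nx nc xmax W U b l k'))"
    using cbar_of_nonneg tanh_real_nonneg_iff by blast
  moreover have "0 \<le> sigmoid (Ggate nx nc xmax W U b l Go (eta_prev nx nc xmax W U b l k'))"
    using sigmoid_pos less_imp_le by blast
  ultimately show ?thesis using Suc by (simp only: eta_prev.simps) (rule mult_le_one)
qed simp

lemma eta_dec: "0 < xmax \<Longrightarrow> eta_prev nx nc xmax W U b l (Suc k) \<le> eta_prev nx nc xmax W U b l k"
proof (induction k)
  case 0
  then show ?case using eta_lt1[of nx nc xmax W U b l 1] by simp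
next
  case (Suc k)
  let ?e = "eta_prev nx nc xmax W U b l (Suc k)"
  let ?e' = "eta_prev nx nc xmax W U b l k"
  have h: "0 \<le> ?e" "?e \<le> ?e'" using eta_nonneg Suc.IH[OF Suc.prems] by blast+
  have A: "tanh (cbar_of nx nc xmax W U b l ?e) \<le> tanh (cbar_of nx nc xmax W U b l ?e')"
    using cbar_of_mono[OF Suc.prems h] tanh_real_le_iff by blast
  have B: "sigmoid (Ggate nx nc xmax W U b l Go ?e) \<le> sigmoid (Ggate nx nc xmax W U b l Go ?e')"
    by (intro sigmoid_mono Ggate_mono h)
  have C: "0 \<le> tanh (cbar_of nx nc xmax W U b l ?e)"
    using cbar_of_nonneg tanh_real_nonneg_iff by blast
  have D: "0 \<le> sigmoid (Ggate nx nc xmax W U b l Go ?e)"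
    using sigmoid_pos less_imp_le by blast
  have "tanh (cbar_of nx nc xmax W U b l ?e) * sigmoid (Ggate nx nc xmax W U b l Go ?e)
     \<le> tanh (cbar_of nx nc xmax W U b l ?e') * sigmoid (Ggate nx nc xmax W U b l Go ?e')"
    using A B C D by (rule mult_mono')
  then show ?case by (simp only: eta_prev.simps(2))
qed


lemma hbar_eq: "hbar nx nc xmax W U b l k = eta_prev nx nc xmax W U b l (Suc k)"
  unfolding hbar_def cbar_def by simp

lemma mv_bound:
  assumes "\<And>m. m < n \<Longrightarrow> \<bar>v m\<bar> \<le> B"
  shows "\<bar>mv n A v j\<bar> \<le> B * (\<Sum>m<n. \<bar>A j m\<bar>)"
proof -
  have "\<bar>mv n A v j\<bar> \<le> (\<Sum>m<n. \<bar>A j m * v m\<bar>)" unfolding mv_def by (rule sum_abs)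
  also have "\<dots> \<le> (\<Sum>m<n. \<bar>A j m\<bar> * B)"
    by (intro sum_mono) (simp add: abs_mult assms mult_left_mono)
  finally show ?thesis by (simp add: sum_distrib_left mult.commute)
qed

lemma gate_bound:
  assumes "j < nc" "\<bar>a\<bar> \<le> xmaxl xmax l * (\<Sum>m<nin nx nc l. \<bar>W l g j m\<bar>)"
    "\<bar>u\<bar> \<le> e * (\<Sum>m<nc. \<bar>U l g j m\<bar>)"
  shows "a + u + b l g j \<le> Ggate nx nc xmax W U b l g e"
proof -
  have "a + u + b l g j \<le> xmaxl xmax l * (\<Sum>m<nin nx nc l. \<bar>W l g j m\<bar>)
                            + e * (\<Sum>m<nc. \<bar>U l g j m\<bar>) + b l g j"
    using assms(2,3) abs_ge_self[of a] abs_ge_self[of u] by linarith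
  also have "\<dots> \<le> \<bar>max (xmaxl xmax l * (\<Sum>m<nin nx nc l. \<bar>W l g j m\<bar>)
                            + e * (\<Sum>m<nc. \<bar>U l g j m\<bar>) + b l g j) 0\<bar>"
    by simp
  also have "\<dots> \<le> Ggate nx nc xmax W U b l g e"
    unfolding Ggate_def by (rule norm_inf_ge[OF assms(1)])
  finally show ?thesis .
qed

lemma cell_bound:
  assumes "j < nc" "\<bar>a\<bar> \<le> xmaxl xmax l * (\<Sum>m<nin nx nc l. \<bar>W l Gc j m\<bar>)"
    "\<bar>u\<bar> \<le> e * (\<Sum>m<nc. \<bar>U l Gc j m\<bar>)"
  shows "\<bar>a + u + b l Gc j\<bar> \<le> Gcell nx nc xmax W U b l e"
proof -
  have "\<bar>a + u + b l Gc j\<bar> \<le> xmaxl xmax l * (\<Sum>m<nin nx nc l. \<bar>W l Gc j m\<bar>)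
                      + e * (\<Sum>m<nc. \<bar>U l Gc j m\<bar>) + \<bar>b l Gc j\<bar>"
    using assms(2,3) abs_triangle_ineq[of "a+u" "b l Gc j"] abs_triangle_ineq[of a u] by linarith
  also have "\<dots> \<le> \<bar>xmaxl xmax l * (\<Sum>m<nin nx nc l. \<bar>W l Gc j m\<bar>)
                      + e * (\<Sum>m<nc. \<bar>U l Gc j m\<bar>) + \<bar>b l Gc j\<bar>\<bar>"
    by simp
  also have "\<dots> \<le> Gcell nx nc xmax W U b l e"
    unfolding Gcell_def by (rule norm_inf_ge[OF assms(1)])
  finally show ?thesis .
qed

lemma step_bound:
  fixes zf zi zc zo cj Gf' Gi' Gc' Go' cb :: real
  assumes "zf \<le> Gf'" "zi \<le> Gi'" "\<bar>zc\<bar> \<le> Gc'" "zo \<le> Go'" "\<bar>cj\<bar> \<le> cb"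
    and cb: "cb = sigmoid Gi' * tanh Gc' / (1 - sigmoid Gf')"
  shows "\<bar>sigmoid zf * cj + sigmoid zi * tanh zc\<bar> \<le> cb"
    and "\<bar>sigmoid zo * tanh (sigmoid zf * cj + sigmoid zi * tanh zc)\<bar> \<le> tanh cb * sigmoid Go'"
proof -
  have sf: "0 < sigmoid zf" "sigmoid zf \<le> sigmoid Gf'" "sigmoid Gf' < 1"
    using assms sigmoid_pos sigmoid_lt1 sigmoid_mono by auto
  have si: "0 < sigmoid zi" "sigmoid zi \<le> sigmoid Gi'"
    using assms sigmoid_pos sigmoid_mono by auto
  have so: "0 < sigmoid zo" "sigmoid zo \<le> sigmoid Go'"
    using assms sigmoid_pos sigmoid_mono by auto
  have tc: "\<bar>tanh zc\<bar> \<le> tanh Gc'"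
    using assms(3) by (metis tanh_real_abs tanh_real_le_iff)
  have cb0: "0 \<le> cb" using assms(5) by linarith
  have "\<bar>sigmoid zf * cj + sigmoid zi * tanh zc\<bar> \<le> sigmoid zf * \<bar>cj\<bar> + sigmoid zi * \<bar>tanh zc\<bar>"
    using sf si abs_triangle_ineq[of "sigmoid zf * cj" "sigmoid zi * tanh zc"] by (simp add: abs_mult)
  also have "\<dots> \<le> sigmoid Gf' * cb + sigmoid Gi' * tanh Gc'"
    using sf si tc assms(5) cb0 by (intro add_mono mult_mono) auto
  also have "\<dots> = cb"
    using sf(3) unfolding cb by (simp add: field_simps)
  finally show c1: "\<bar>sigmoid zf * cj + sigmoid zi * tanh zc\<bar> \<le> cb" .
  have "\<bar>sigmoid zo * tanh (sigmoid zf * cj + sigmoid zi * tanh zc)\<bar>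
      = sigmoid zo * tanh \<bar>sigmoid zf * cj + sigmoid zi * tanh zc\<bar>"
    using so by (simp add: abs_mult tanh_real_abs)
  also have "\<dots> \<le> sigmoid Go' * tanh cb"
    using so c1 cb0 by (intro mult_mono) (auto simp: tanh_real_nonneg_iff tanh_real_le_iff simp del: tanh_real_abs)
  finally show "\<bar>sigmoid zo * tanh (sigmoid zf * cj + sigmoid zi * tanh zc)\<bar> \<le> tanh cb * sigmoid Go'"
    by (simp add: mult.commute)
qed

lemma sig_tanh_bound: "\<bar>sigmoid a * tanh c\<bar> \<le> 1"
proof -
  have "\<bar>tanh c\<bar> \<le> 1" using tanh_real_lt_1[of "\<bar>c\<bar>"] by (simp add: tanh_real_abs)
  moreover have "\<bar>sigmoid a\<bar> \<le> 1" using sigmoid_pos[of a] sigmoid_lt1[of a] by simp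
  ultimately show ?thesis by (simp add: abs_mult mult_le_one)
qed


theorem proposition4p1:
  fixes L nx nc :: nat and xmax :: real
    and W U :: "nat \<Rightarrow> gate \<Rightarrow> nat \<Rightarrow> nat \<Rightarrow> real"
    and b :: "nat \<Rightarrow> gate \<Rightarrow> nat \<Rightarrow> real"
    and l k :: nat
  assumes "xmax > 0" and "l \<in> {1..L}"
  shows "(\<forall>x c h.
            (\<forall>t. \<forall>j<nx. \<bar>x t j\<bar> \<le> xmax)
          \<and> (\<forall>l'\<in>{1..L}. \<forall>j<nc. \<bar>h l' 0 j\<bar> < 1)
          \<and> lstm_traj L nx nc W U b x c h
          \<and> (c l 0, h l 0) \<in> Sset nx nc xmax W U b l k
          \<longrightarrow> (\<forall>t. (c l t, h l t) \<in> Sset nx nc xmax W U b l k))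
       \<and> (\<forall>k'. Sset nx nc xmax W U b l (Suc k') \<subseteq> Sset nx nc xmax W U b l k')"
proof -
  have memS: "\<And>cc hh kk. ((cc, hh) \<in> Sset nx nc xmax W U b l kk) \<longleftrightarrow>
      norm_inf nc cc \<le> cbar nx nc xmax W U b l kk \<and> norm_inf nc hh \<le> hbar nx nc xmax W U b l kk"
    unfolding Sset_def Cset_def Hset_def by simp
  have part2: "\<forall>k'. Sset nx nc xmax W U b l (Suc k') \<subseteq> Sset nx nc xmax W U b l k'"
  proof
    fix k'
    have "cbar nx nc xmax W U b l (Suc k') \<le> cbar nx nc xmax W U b l k'"
      unfolding cbar_def using assms(1) eta_nonneg eta_dec[OF assms(1)] by (rule cbar_of_mono)
    moreover have "hbar nx nc xmax W U b l (Suc k') \<le> hbar nx nc xmax W U b l k'"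
      unfolding hbar_eq using assms(1) by (rule eta_dec)
    ultimately show "Sset nx nc xmax W U b l (Suc k') \<subseteq> Sset nx nc xmax W U b l k'"
      unfolding Sset_def Cset_def Hset_def by auto
  qed
  have part1: "\<forall>x c h.
            (\<forall>t. \<forall>j<nx. \<bar>x t j\<bar> \<le> xmax)
          \<and> (\<forall>l'\<in>{1..L}. \<forall>j<nc. \<bar>h l' 0 j\<bar> < 1)
          \<and> lstm_traj L nx nc W U b x c h
          \<and> (c l 0, h l 0) \<in> Sset nx nc xmax W U b l k
          \<longrightarrow> (\<forall>t. (c l t, h l t) \<in> Sset nx nc xmax W U b l k)"
  proof (intro allI impI)
    fix x c h t
    assume A: "(\<forall>t. \<forall>j<nx. \<bar>x t j\<bar> \<le> xmax)
          \<and> (\<forall>l'\<in>{1..L}. \<forall>j<nc. \<bar>h l' 0 j\<bar> < 1)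
          \<and> lstm_traj L nx nc W U b x c h
          \<and> (c l 0, h l 0) \<in> Sset nx nc xmax W U b l k"
    then have xb: "\<And>t j. j < nx \<Longrightarrow> \<bar>x t j\<bar> \<le> xmax" and tr: "lstm_traj L nx nc W U b x c h"
      and init: "(c l 0, h l 0) \<in> Sset nx nc xmax W U b l k" by auto
    define e where "e = eta_prev nx nc xmax W U b l k"
    define xin where "xin = (\<lambda>t. if l = 1 then x t else h (l - 1) (Suc t))"
    define zz where "zz = (\<lambda>t j g. mv (nin nx nc l) (W l g) (xin t) j + mv nc (U l g) (h l t) j + b l g j)"
    have trl: "\<And>t j. j < nc \<Longrightarrow> c l (Suc t) j = sigmoid (zz t j Gf) * c l t j + sigmoid (zz t j Gi) * tanh (zz t j Gc)
        \<and> h l (Suc t) j = sigmoid (zz t j Go) * tanh (c l (Suc t) j)"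
      using tr assms(2) unfolding lstm_traj_def Let_def zz_def xin_def by blast
    have xinb: "\<And>t m. m < nin nx nc l \<Longrightarrow> \<bar>xin t m\<bar> \<le> xmaxl xmax l"
    proof -
      fix t m assume m: "m < nin nx nc l"
      show "\<bar>xin t m\<bar> \<le> xmaxl xmax l"
      proof (cases "l = 1")
        case True
        then show ?thesis using m xb unfolding xin_def nin_def xmaxl_def by simp
      next
        case False
        then have l1: "l - 1 \<in> {1..L}" and mnc: "m < nc" using assms(2) m unfolding nin_def by auto
        from tr l1 mnc obtain p q where "h (l - 1) (Suc t) m = sigmoid p * tanh q"
          unfolding lstm_traj_def Let_def by blast
        then show ?thesis using False sig_tanh_bound unfolding xin_def xmaxl_def by simp
      qed
    qed
    have e0: "0 \<le> e" unfolding e_def by (rule eta_nonneg)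
    have cbe: "cbar nx nc xmax W U b l k = cbar_of nx nc xmax W U b l e" unfolding cbar_def e_def ..
    have hbe: "hbar nx nc xmax W U b l k = tanh (cbar nx nc xmax W U b l k) * sigmoid (Ggate nx nc xmax W U b l Go e)"
      unfolding hbar_def e_def ..
    have hle: "hbar nx nc xmax W U b l k \<le> e" unfolding hbar_eq e_def using assms(1) by (rule eta_dec)
    have cb0: "0 \<le> cbar nx nc xmax W U b l k" unfolding cbar_def by (rule cbar_of_nonneg)
    have hb0: "0 \<le> hbar nx nc xmax W U b l k" unfolding hbar_eq by (rule eta_nonneg)
    show "(c l t, h l t) \<in> Sset nx nc xmax W U b l k"
    proof (induction t)
      case 0
      then show ?case using init .
    next
      case (Suc t)
      then have cI: "norm_inf nc (c l t) \<le> cbar nx nc xmax W U b l k"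
        and hI: "norm_inf nc (h l t) \<le> hbar nx nc xmax W U b l k" using memS by auto
      have hm: "\<And>m. m < nc \<Longrightarrow> \<bar>h l t m\<bar> \<le> e"
        using norm_inf_le_iff[OF hI] hle by (meson order_trans)
      have bd: "\<bar>c l (Suc t) j\<bar> \<le> cbar nx nc xmax W U b l k \<and> \<bar>h l (Suc t) j\<bar> \<le> hbar nx nc xmax W U b l k"
        if j: "j < nc" for j
      proof -
        have ma: "\<And>g. \<bar>mv (nin nx nc l) (W l g) (xin t) j\<bar> \<le> xmaxl xmax l * (\<Sum>m<nin nx nc l. \<bar>W l g j m\<bar>)"
          by (rule mv_bound) (rule xinb)
        have mu: "\<And>g. \<bar>mv nc (U l g) (h l t) j\<bar> \<le> e * (\<Sum>m<nc. \<bar>U l g j m\<bar>)"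
          by (rule mv_bound) (rule hm)
        have gb: "\<And>g. zz t j g \<le> Ggate nx nc xmax W U b l g e"
          unfolding zz_def using j ma mu by (rule gate_bound)
        have cbb: "\<bar>zz t j Gc\<bar> \<le> Gcell nx nc xmax W U b l e"
          unfolding zz_def using j ma mu by (rule cell_bound)
        have cj: "\<bar>c l t j\<bar> \<le> cbar nx nc xmax W U b l k" using norm_inf_le_iff[OF cI j] .
        have cbd: "cbar nx nc xmax W U b l k = sigmoid (Ggate nx nc xmax W U b l Gi e) * tanh (Gcell nx nc xmax W U b l e)
                 / (1 - sigmoid (Ggate nx nc xmax W U b l Gf e))" unfolding cbe cbar_of_def ..
        note sb = step_bound[OF gb[of Gf] gb[of Gi] cbb gb[of Go] cj cbd]
        show ?thesis using sb trl[OF j, of t] hbe by simp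
      qed
      show ?case unfolding memS
        using bd cb0 hb0 by (auto intro!: norm_inf_le)
    qed
  qed
  show ?thesis using part1 part2 by blast
qed

end
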